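(* Let $\lambda\ge0$ and let $\widehat{\boldsymbol\theta}_\lambda\in\mathcal P_{\mathbf a,R}$ be a minimum-norm solution of the $\lambda$-ERM problem. If the well-separation assumption (A3) holds with constants $K>0$, $r>1$, then for all $t>0$, \[\mathbb P\big(\operatorname{dist}(\widehat{\boldsymbol\theta}_\lambda,\operatorname{argmin}_{\mathcal P_{\mathbf a,R}}\mathcal R_{\ell,\lambda})\ge t\big)\le4\,\mathrm{Cov}_\infty\Big(\mathcal{NN},\frac{Kt^r}{24\,\mathrm{Lip}(\mathcal F_\sigma)}\Big)\exp\Big(\frac{-nK^2t^{2r}}{288}\Big).\]
   Context: Setting: $\mathcal X=[0,1]^d$, $\rho$ a probability distribution on $\mathcal X\times\{-1,1\}$, $(X,Y)\sim\rho$, $(x_i,y_i)_{i=1}^n$ i.i.d. from $\rho$ (the probability is over this sample). Networks: $\sigma(t)=\max\{0,t\}$; architecture $\mathbf a=(a_0,\dots,a_L)$, $a_0=d$, $a_L=1$, width $W=\max_la_l$, $P(\mathbf a)=\sum_l(a_la_{l-1}+a_l)$; parametrization $\boldsymbol\theta=((W_l,B_l))_{l=1}^L$, $W_l\in\mathbb R^{a_l\times a_{l-1}}$, $B_l\in\mathbb R^{a_l}$, viewed as a vector in $\mathbb R^{P(\mathbf a)}$ with norms $|\cdot|_\infty$, $|\cdot|_p$; $\mathcal P_{\mathbf a,R}$ is the set of parametrizations with entries in $[-R,R]$. Realization $f(x;\boldsymbol\theta)=\operatorname{clip}_1(T_L\circ\sigma\circ\cdots\circ\sigma\circ T_1(x))$,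 $T_l(z)=W_lz+B_l$, $\operatorname{clip}_1(t)=\max(-1,\min(1,t))$. Realization map $\mathcal F_\sigma:\boldsymbol\theta\mapsto f(\cdot;\boldsymbol\theta)|_{\mathcal X}$ on $\mathcal P_{\mathbf a,R}$ with image $\mathcal{NN}(\mathbf a,W,L,R)$, $\mathrm{Lip}(\mathcal F_\sigma)=\sup_{\boldsymbol\theta\ne\boldsymbol\theta'}\|\mathcal F_\sigma(\boldsymbol\theta)-\mathcal F_\sigma(\boldsymbol\theta')\|_{C(\mathcal X)}/|\boldsymbol\theta-\boldsymbol\theta'|_\infty$. $\mathrm{Cov}_\infty(\mathcal{NN},\varepsilon)$: smallest $N$ such that some $g_1,\dots,g_N\in L^\infty(\mathcal X)$ satisfy that every $f\in\mathcal{NN}(\mathbf a,W,L,R)$ has $\|f-g_j\|_{L^\infty}\le\varepsilon$ for some $j$. Fix $0<p<\infty$: $\widehat{\mathcal R}_{\ell,\lambda}(\boldsymbol\theta)=\frac1n\sum_i(f(x_i;\boldsymbol\theta)-y_i)^2+\frac\lambda2|\boldsymbol\theta|_p^p$, $\mathcal R_{\ell,\lambda}(\boldsymbol\theta)=\mathbb E[(f(X;\boldsymbol\theta)-Y)^2]+\frac\lambda2|\boldsymbol\theta|_p^p$. A minimum-norm solution of the $\lambda$-ERM problem is a minimizer of $|\boldsymbol\theta|_\infty$ among minimizers of $\widehat{\mathcal R}_{\ell,\lambda}$ over $\mathcal P_{\mathbf a,R}$. $\operatorname{dist}(\boldsymbol\theta,A)=\inf_{\boldsymbol\theta'\in A}|\boldsymbol\theta-\boldsymbol\theta'|_\infty$.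 Assumption (A3): there are $K>0$, $r>1$ such that for all $\lambda\ge0$, $t>0$ and every $\boldsymbol\theta_\lambda\in\operatorname{argmin}_{\mathcal P_{\mathbf a,R}}\mathcal R_{\ell,\lambda}$: $\inf_{\boldsymbol\theta\in\mathcal P_{\mathbf a,R}:\operatorname{dist}(\boldsymbol\theta,\operatorname{argmin}_{\mathcal P_{\mathbf a,R}}\mathcal R_{\ell,\lambda})\ge t}\mathcal R_{\ell,\lambda}(\boldsymbol\theta)-\mathcal R_{\ell,\lambda}(\boldsymbol\theta_\lambda)\ge Kt^r$. *)

theory Defs
  imports "HOL-Probability.Probability"
begin

definition cube :: "nat \<Rightarrow> (nat \<Rightarrow> real) set" where
  "cube d = PiE {..<d} (\<lambda>_. {0..1::real})"

definition cube_measure :: "nat \<Rightarrow> (nat \<Rightarrow> real) measure" where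
  "cube_measure d = PiM {..<d} (\<lambda>_. restrict_space lborel {0..1::real})"

text \<open>Architecture a = [a_0,...,a_L] as a list; L = length a - 1.
  Number of parameters P(a) = sum_{l=1}^L (a_l a_{l-1} + a_l).\<close>
definition nparams :: "nat list \<Rightarrow> nat" where
  "nparams a = (\<Sum>l\<in>{1..<length a}. a!l * a!(l-1) + a!l)"

definition layer_off :: "nat list \<Rightarrow> nat \<Rightarrow> nat" where
  "layer_off a l = (\<Sum>k\<in>{1..<l}. a!k * a!(k-1) + a!k)"

text \<open>Parameter vector theta in R^{P(a)}: a function nat => real; entries at index >= P(a) are 0.
  W_l(i,j) = theta(off_l + i*a_{l-1} + j), B_l(i) = theta(off_l + a_l a_{l-1} + i).
  Affine map T_l.\<close>
definition affine_layer :: "nat list \<Rightarrow> (nat \<Rightarrow> real) \<Rightarrow> nat \<Rightarrow> (nat \<Rightarrow> real) \<Rightarrow> (nat \<Rightarrow> real)" where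
  "affine_layer a \<theta> l z = (\<lambda>i. if i < a!l then
      (\<Sum>j<a!(l-1). \<theta> (layer_off a l + i * a!(l-1) + j) * z j)
        + \<theta> (layer_off a l + a!l * a!(l-1) + i)
    else 0)"

definition relu :: "real \<Rightarrow> real" where
  "relu t = max 0 t"

fun hidden :: "nat list \<Rightarrow> (nat \<Rightarrow> real) \<Rightarrow> nat \<Rightarrow> (nat \<Rightarrow> real) \<Rightarrow> (nat \<Rightarrow> real)" where
  "hidden a \<theta> 0 x = x"
| "hidden a \<theta> (Suc l) x = (\<lambda>i. relu (affine_layer a \<theta> (Suc l) (hidden a \<theta> l x) i))"

definition clip1 :: "real \<Rightarrow> real" where
  "clip1 t = max (-1) (min 1 t)"

definition realize :: "nat list \<Rightarrow> (nat \<Rightarrow> real) \<Rightarrow> (nat \<Rightarrow> real) \<Rightarrow> real" where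
  "realize a \<theta> x = clip1 (affine_layer a \<theta> (length a - 1) (hidden a \<theta> (length a - 2) x) 0)"

definition params :: "nat list \<Rightarrow> real \<Rightarrow> (nat \<Rightarrow> real) set" where
  "params a R = {\<theta>. (\<forall>i<nparams a. \<bar>\<theta> i\<bar> \<le> R) \<and> (\<forall>i\<ge>nparams a. \<theta> i = 0)}"

definition norm_inf :: "nat list \<Rightarrow> (nat \<Rightarrow> real) \<Rightarrow> real" where
  "norm_inf a \<theta> = Max ((\<lambda>i. \<bar>\<theta> i\<bar>) ` {..<nparams a})"

definition norm_pp :: "nat list \<Rightarrow> real \<Rightarrow> (nat \<Rightarrow> real) \<Rightarrow> real" where
  "norm_pp a p \<theta> = (\<Sum>i<nparams a. \<bar>\<theta> i\<bar> powr p)"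

definition emp_risk :: "nat list \<Rightarrow> real \<Rightarrow> real \<Rightarrow> nat \<Rightarrow> (nat \<Rightarrow> (nat \<Rightarrow> real) \<times> real) \<Rightarrow> (nat \<Rightarrow> real) \<Rightarrow> real" where
  "emp_risk a p lam n z \<theta> =
     (1 / real n) * (\<Sum>i<n. (realize a \<theta> (fst (z i)) - snd (z i))\<^sup>2) + lam / 2 * norm_pp a p \<theta>"

definition pop_risk :: "nat list \<Rightarrow> real \<Rightarrow> real \<Rightarrow> ((nat \<Rightarrow> real) \<times> real) measure \<Rightarrow> (nat \<Rightarrow> real) \<Rightarrow> real" where
  "pop_risk a p lam \<rho> \<theta> =
     (\<integral>w. (realize a \<theta> (fst w) - snd w)\<^sup>2 \<partial>\<rho>) + lam / 2 * norm_pp a p \<theta>"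

definition argmin_on :: "'b set \<Rightarrow> ('b \<Rightarrow> real) \<Rightarrow> 'b set" where
  "argmin_on S F = {x\<in>S. \<forall>y\<in>S. F x \<le> F y}"

definition min_norm_sol :: "nat list \<Rightarrow> real \<Rightarrow> real \<Rightarrow> real \<Rightarrow> nat \<Rightarrow> (nat \<Rightarrow> (nat \<Rightarrow> real) \<times> real) \<Rightarrow> (nat \<Rightarrow> real) \<Rightarrow> bool" where
  "min_norm_sol a R p lam n z \<theta> \<longleftrightarrow>
     \<theta> \<in> argmin_on (argmin_on (params a R) (emp_risk a p lam n z)) (norm_inf a)"

definition pdist :: "nat list \<Rightarrow> (nat \<Rightarrow> real) \<Rightarrow> (nat \<Rightarrow> real) set \<Rightarrow> real" where
  "pdist a \<theta> A = Inf ((\<lambda>\<theta>'. norm_inf a (\<lambda>i. \<theta> i - \<theta>' i)) ` A)"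

definition NN :: "nat list \<Rightarrow> real \<Rightarrow> ((nat \<Rightarrow> real) \<Rightarrow> real) set" where
  "NN a R = (\<lambda>\<theta>. restrict (realize a \<theta>) (cube (a!0))) ` params a R"

definition Lip_real :: "nat list \<Rightarrow> real \<Rightarrow> real" where
  "Lip_real a R = Sup {(SUP x\<in>cube (a!0). \<bar>realize a \<theta> x - realize a \<theta>' x\<bar>) / norm_inf a (\<lambda>i. \<theta> i - \<theta>' i)
       | \<theta> \<theta>'. \<theta> \<in> params a R \<and> \<theta>' \<in> params a R \<and> \<theta> \<noteq> \<theta>'}"

definition Cov_inf :: "nat list \<Rightarrow> real \<Rightarrow> real \<Rightarrow> nat" where
  "Cov_inf a R \<epsilon> = (LEAST N. \<exists>g :: nat \<Rightarrow> (nat \<Rightarrow> real) \<Rightarrow> real.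
      (\<forall>j<N. g j \<in> borel_measurable (cube_measure (a!0))
             \<and> esssup (cube_measure (a!0)) (\<lambda>x. ereal \<bar>g j x\<bar>) < \<infinity>)
    \<and> (\<forall>f\<in>NN a R. \<exists>j<N. esssup (cube_measure (a!0)) (\<lambda>x. ereal \<bar>f x - g j x\<bar>) \<le> ereal \<epsilon>))"

definition A3 :: "nat list \<Rightarrow> real \<Rightarrow> real \<Rightarrow> ((nat \<Rightarrow> real) \<times> real) measure \<Rightarrow> real \<Rightarrow> real \<Rightarrow> bool" where
  "A3 a R p \<rho> K r \<longleftrightarrow> (\<forall>lam\<ge>0. \<forall>t>0. \<forall>\<theta>l\<in>argmin_on (params a R) (pop_risk a p lam \<rho>).
      \<forall>\<theta>\<in>params a R. pdist a \<theta> (argmin_on (params a R) (pop_risk a p lam \<rho>)) \<ge> t \<longrightarrow>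
        pop_risk a p lam \<rho> \<theta> - pop_risk a p lam \<rho> \<theta>l \<ge> K * t powr r)"

end

theory Submission
  imports Defs
begin


lemma sum_lip:
  fixes w w' z z' :: "nat \<Rightarrow> real"
  assumes "\<And>j. j < m \<Longrightarrow> \<bar>w' j\<bar> \<le> R" "\<And>j. j < m \<Longrightarrow> \<bar>w j - w' j\<bar> \<le> \<delta>"
    "\<And>j. j < m \<Longrightarrow> \<bar>z j\<bar> \<le> M" "\<And>j. j < m \<Longrightarrow> \<bar>z j - z' j\<bar> \<le> D"
  shows "\<bar>(\<Sum>j<m. w j * z j) - (\<Sum>j<m. w' j * z' j)\<bar> \<le> real m * (\<delta> * M + R * D)"
proof -
  have "\<bar>(\<Sum>j<m. w j * z j) - (\<Sum>j<m. w' j * z' j)\<bar> = \<bar>\<Sum>j<m. (w j - w' j) * z j + w' j * (z j - z' j)\<bar>"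
    by (simp add: sum_subtractf[symmetric] algebra_simps)
  also have "\<dots> \<le> (\<Sum>j<m. \<bar>(w j - w' j) * z j + w' j * (z j - z' j)\<bar>)" by (rule sum_abs)
  also have "\<dots> \<le> (\<Sum>j<m. \<delta> * M + R * D)"
  proof (rule sum_mono)
    fix j assume "j \<in> {..<m}"
    hence j: "j < m" by simp
    have "\<bar>(w j - w' j) * z j\<bar> \<le> \<delta> * M"
      unfolding abs_mult by (rule mult_mono') (use assms j in auto)
    moreover have "\<bar>w' j * (z j - z' j)\<bar> \<le> R * D"
      unfolding abs_mult by (rule mult_mono') (use assms j in auto)
    ultimately show "\<bar>(w j - w' j) * z j + w' j * (z j - z' j)\<bar> \<le> \<delta> * M + R * D"
      by (smt (verit) abs_triangle_ineq)
  qed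
  finally show ?thesis by simp
qed

lemma sum_bnd:
  fixes w z :: "nat \<Rightarrow> real"
  assumes "\<And>j. j < m \<Longrightarrow> \<bar>w j\<bar> \<le> R" "\<And>j. j < m \<Longrightarrow> \<bar>z j\<bar> \<le> M" "0 \<le> R"
  shows "\<bar>\<Sum>j<m. w j * z j\<bar> \<le> real m * (R * M)"
proof -
  have "\<bar>\<Sum>j<m. w j * z j\<bar> \<le> (\<Sum>j<m. \<bar>w j * z j\<bar>)" by (rule sum_abs)
  also have "\<dots> \<le> (\<Sum>j<m. R * M)"
    by (rule sum_mono) (use assms in \<open>auto simp: abs_mult intro!: mult_mono\<close>)
  finally show ?thesis by simp
qed

fun Mb :: "nat list \<Rightarrow> real \<Rightarrow> nat \<Rightarrow> real" where
  "Mb a R 0 = 1"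
| "Mb a R (Suc l) = R * (real (a!l) * Mb a R l + 1)"

fun Cb :: "nat list \<Rightarrow> real \<Rightarrow> nat \<Rightarrow> real" where
  "Cb a R 0 = 1"
| "Cb a R (Suc l) = real (a!l) * (Mb a R l + R * Cb a R l) + 1"

lemma Mb_nonneg: "0 \<le> R \<Longrightarrow> 0 \<le> Mb a R l"
  by (induction l) auto

lemma Cb_ge1: "0 \<le> R \<Longrightarrow> 1 \<le> Cb a R l"
  by (induction l) (auto intro!: mult_nonneg_nonneg add_nonneg_nonneg Mb_nonneg)

lemma affine_bnd:
  assumes R: "0 \<le> R" and th: "\<And>k. \<bar>\<theta> k\<bar> \<le> R" "\<And>k. \<bar>\<theta>' k\<bar> \<le> R" "\<And>k. \<bar>\<theta> k - \<theta>' k\<bar> \<le> \<delta>"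
    and z: "\<And>j. j < a!l \<Longrightarrow> \<bar>z j\<bar> \<le> M" "\<And>j. j < a!l \<Longrightarrow> \<bar>z j - z' j\<bar> \<le> D"
    and i: "i < a!Suc l"
  shows "\<bar>affine_layer a \<theta> (Suc l) z i\<bar> \<le> R * (real (a!l) * M + 1)"
    "\<bar>affine_layer a \<theta> (Suc l) z i - affine_layer a \<theta>' (Suc l) z' i\<bar> \<le> real (a!l) * (\<delta> * M + R * D) + \<delta>"
proof -
  let ?o = "layer_off a (Suc l)"
  have e: "affine_layer a \<theta> (Suc l) z i = (\<Sum>j<a!l. \<theta> (?o + i * a!l + j) * z j) + \<theta> (?o + a!Suc l * a!l + i)"
    "affine_layer a \<theta>' (Suc l) z' i = (\<Sum>j<a!l. \<theta>' (?o + i * a!l + j) * z' j) + \<theta>' (?o + a!Suc l * a!l + i)"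
    using i by (simp_all add: affine_layer_def)
  have "\<bar>\<Sum>j<a!l. \<theta> (?o + i * a!l + j) * z j\<bar> \<le> real (a!l) * (R * M)"
    by (rule sum_bnd) (use th z R in auto)
  then show "\<bar>affine_layer a \<theta> (Suc l) z i\<bar> \<le> R * (real (a!l) * M + 1)"
    unfolding e using th(1)[of "?o + a!Suc l * a!l + i"] by (simp add: algebra_simps)
  have "\<bar>(\<Sum>j<a!l. \<theta> (?o + i * a!l + j) * z j) - (\<Sum>j<a!l. \<theta>' (?o + i * a!l + j) * z' j)\<bar> \<le> real (a!l) * (\<delta> * M + R * D)"
    by (rule sum_lip) (use th z in auto)
  then show "\<bar>affine_layer a \<theta> (Suc l) z i - affine_layer a \<theta>' (Suc l) z' i\<bar> \<le> real (a!l) * (\<delta> * M + R * D) + \<delta>"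
    unfolding e using th(3)[of "?o + a!Suc l * a!l + i"] by linarith
qed

lemma relu_lip: "\<bar>relu u - relu v\<bar> \<le> \<bar>u - v\<bar>" "\<bar>relu u\<bar> \<le> \<bar>u\<bar>"
  by (auto simp: relu_def)

lemma clip_lip: "\<bar>clip1 u - clip1 v\<bar> \<le> \<bar>u - v\<bar>" "\<bar>clip1 u\<bar> \<le> 1"
  by (auto simp: clip1_def)

lemma hidden_bnd:
  assumes R: "0 \<le> R" and th: "\<And>k. \<bar>\<theta> k\<bar> \<le> R" "\<And>k. \<bar>\<theta>' k\<bar> \<le> R" "\<And>k. \<bar>\<theta> k - \<theta>' k\<bar> \<le> \<delta>"
    and x: "\<And>j. j < a!0 \<Longrightarrow> \<bar>x j\<bar> \<le> 1" "\<And>j. j < a!0 \<Longrightarrow> \<bar>x' j\<bar> \<le> 1" "\<And>j. j < a!0 \<Longrightarrow> \<bar>x j - x' j\<bar> \<le> \<delta>"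
  shows "\<forall>i < a!l. \<bar>hidden a \<theta> l x i\<bar> \<le> Mb a R l \<and> \<bar>hidden a \<theta>' l x' i\<bar> \<le> Mb a R l
     \<and> \<bar>hidden a \<theta> l x i - hidden a \<theta>' l x' i\<bar> \<le> Cb a R l * \<delta>"
proof (induction l)
  case 0
  then show ?case using x by simp
next
  case (Suc l)
  have th': "\<And>k. \<bar>\<theta>' k - \<theta> k\<bar> \<le> \<delta>" using th(3) by (simp add: abs_minus_commute)
  show ?case
  proof (intro allI impI conjI)
    fix i assume i: "i < a!Suc l"
    have b1: "\<bar>affine_layer a \<theta> (Suc l) (hidden a \<theta> l x) i\<bar> \<le> R * (real (a!l) * Mb a R l + 1)"
      by (rule affine_bnd(1)[OF R th, where D=0 and z'="hidden a \<theta> l x"]) (use Suc.IH i in auto)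
    have b2: "\<bar>affine_layer a \<theta>' (Suc l) (hidden a \<theta>' l x') i\<bar> \<le> R * (real (a!l) * Mb a R l + 1)"
      by (rule affine_bnd(1)[OF R th(2,1) th', where D=0 and z'="hidden a \<theta>' l x'"]) (use Suc.IH i in auto)
    have b3: "\<bar>affine_layer a \<theta> (Suc l) (hidden a \<theta> l x) i - affine_layer a \<theta>' (Suc l) (hidden a \<theta>' l x') i\<bar>
        \<le> real (a!l) * (\<delta> * Mb a R l + R * (Cb a R l * \<delta>)) + \<delta>"
      by (rule affine_bnd(2)[OF R th]) (use Suc.IH i in auto)
    show "\<bar>hidden a \<theta> (Suc l) x i\<bar> \<le> Mb a R (Suc l)"
      using b1 relu_lip(2) by (simp, meson order_trans)
    show "\<bar>hidden a \<theta>' (Suc l) x' i\<bar> \<le> Mb a R (Suc l)"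
      using b2 relu_lip(2) by (simp, meson order_trans)
    have "real (a!l) * (\<delta> * Mb a R l + R * (Cb a R l * \<delta>)) + \<delta> = Cb a R (Suc l) * \<delta>"
      by (simp add: algebra_simps)
    then show "\<bar>hidden a \<theta> (Suc l) x i - hidden a \<theta>' (Suc l) x' i\<bar> \<le> Cb a R (Suc l) * \<delta>"
      using b3 relu_lip(1) by (simp, metis order_trans)
  qed
qed

definition LC :: "nat list \<Rightarrow> real \<Rightarrow> real" where
  "LC a R = Cb a R (length a - 1)"

lemma realize_lip:
  assumes len: "length a \<ge> 2" and pos: "0 < a!(length a - 1)"
    and R: "0 \<le> R" and th: "\<And>k. \<bar>\<theta> k\<bar> \<le> R" "\<And>k. \<bar>\<theta>' k\<bar> \<le> R" "\<And>k. \<bar>\<theta> k - \<theta>' k\<bar> \<le> \<delta>"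
    and x: "\<And>j. j < a!0 \<Longrightarrow> \<bar>x j\<bar> \<le> 1" "\<And>j. j < a!0 \<Longrightarrow> \<bar>x' j\<bar> \<le> 1" "\<And>j. j < a!0 \<Longrightarrow> \<bar>x j - x' j\<bar> \<le> \<delta>"
  shows "\<bar>realize a \<theta> x - realize a \<theta>' x'\<bar> \<le> LC a R * \<delta>"
proof -
  define l where "l = length a - 2"
  have L: "length a - 1 = Suc l" using len by (simp add: l_def)
  note H = hidden_bnd[OF R th x, where l=l]
  have "\<bar>affine_layer a \<theta> (Suc l) (hidden a \<theta> l x) 0 - affine_layer a \<theta>' (Suc l) (hidden a \<theta>' l x') 0\<bar>
        \<le> real (a!l) * (\<delta> * Mb a R l + R * (Cb a R l * \<delta>)) + \<delta>"
    by (rule affine_bnd(2)[OF R th]) (use H pos L in auto)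
  also have "\<dots> = LC a R * \<delta>" unfolding LC_def L by (simp add: algebra_simps)
  finally show ?thesis unfolding realize_def L[symmetric] l_def[symmetric]
    using clip_lip(1) order_trans by blast
qed



lemma hidden_meas: "i < a!l \<Longrightarrow> (\<lambda>x. hidden a \<theta> l x i) \<in> borel_measurable (cube_measure (a!0))"
proof (induction l arbitrary: i)
  case 0
  have "(\<lambda>x. x i) \<in> measurable (cube_measure (a!0)) (restrict_space lborel {0..1::real})"
    unfolding cube_measure_def using 0 by (intro measurable_component_singleton) auto
  moreover have "(\<lambda>x. x) \<in> measurable (restrict_space lborel {0..1::real}) borel"
    by (intro measurable_restrict_space1) simp
  ultimately show ?case using measurable_comp by fastforce
next
  case (Suc l)
  show ?case
    unfolding hidden.simps affine_layer_def relu_def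
    using Suc by (intro borel_measurable_max borel_measurable_const borel_measurable_add
        borel_measurable_sum borel_measurable_times) auto
qed

lemma realize_meas:
  assumes "length a \<ge> 2"
  shows "realize a \<theta> \<in> borel_measurable (cube_measure (a!0))"
proof -
  define l where "l = length a - 2"
  have L: "length a - 1 = Suc l" using assms by (simp add: l_def)
  have *: "realize a \<theta> = (\<lambda>x. clip1 (affine_layer a \<theta> (Suc l) (hidden a \<theta> l x) 0))"
  proof -
    have L': "length a - Suc 0 = Suc (length a - 2)" using assms by simp
    show ?thesis by (rule ext) (simp add: realize_def L' l_def)
  qed
  show ?thesis unfolding * clip1_def affine_layer_def
    apply (cases "0 < a!Suc l")
     apply (simp only: if_True if_False simp_thms)
     apply (intro borel_measurable_max borel_measurable_min borel_measurable_const borel_measurable_add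
        borel_measurable_sum borel_measurable_times hidden_meas; simp)
    apply (simp only: if_True if_False simp_thms)
    apply (intro borel_measurable_max borel_measurable_min borel_measurable_const)
    done
qed

lemma space_cube: "space (cube_measure d) = cube d"
  by (simp add: cube_measure_def cube_def space_PiM)

lemma loss_meas:
  assumes "length a \<ge> 2" "a!0 = d" "sets \<rho> = sets (cube_measure d \<Otimes>\<^sub>M count_space {-1, 1::real})"
  shows "(\<lambda>w. (realize a \<theta> (fst w) - snd w)\<^sup>2) \<in> borel_measurable \<rho>"
proof -
  have m: "realize a \<theta> \<in> borel_measurable (cube_measure d)" using realize_meas[OF assms(1)] assms(2) by simp
  have "(\<lambda>w. (realize a \<theta> (fst w) - snd w)\<^sup>2) \<in> borel_measurable (cube_measure d \<Otimes>\<^sub>M count_space {-1, 1::real})"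
  proof -
    have f: "(\<lambda>w. realize a \<theta> (fst w)) \<in> borel_measurable (cube_measure d \<Otimes>\<^sub>M count_space {-1, 1::real})"
      using measurable_comp[OF measurable_fst m] by (simp add: comp_def)
    have s: "(\<lambda>w. snd w) \<in> borel_measurable (cube_measure d \<Otimes>\<^sub>M count_space {-1, 1::real})"
    proof -
      have "(\<lambda>y::real. y) \<in> borel_measurable (count_space {-1, 1::real})" by simp
      from measurable_compose[OF measurable_snd this] show ?thesis by (metis (no_types))
    qed
    show ?thesis using f s by (intro borel_measurable_power borel_measurable_diff)
  qed
  then show ?thesis using measurable_cong_sets[OF assms(3) refl] by blast
qed



lemma layer_off_mono: "m \<le> m' \<Longrightarrow> layer_off a m \<le> layer_off a m'"
  unfolding layer_off_def by (rule sum_mono2) auto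

lemma layer_off_Suc: "1 \<le> l \<Longrightarrow> layer_off a (Suc l) = layer_off a l + (a!l * a!(l-1) + a!l)"
  unfolding layer_off_def by (simp add: atLeastLessThanSuc)

lemma nparams_off: "nparams a = layer_off a (length a)"
  by (simp add: nparams_def layer_off_def)

lemma idx_lt: "i < (A::nat) \<Longrightarrow> j < m \<Longrightarrow> i * m + j < A * m"
proof -
  assume "i < A" "j < m"
  hence "i * m + j < (i + 1) * m" by simp
  also have "\<dots> \<le> A * m" using \<open>i < A\<close> by (intro mult_right_mono) auto
  finally show ?thesis .
qed

lemma hidden_agree:
  "(\<forall>k < layer_off a (Suc l). \<theta> k = \<theta>' k) \<Longrightarrow> hidden a \<theta> l x = hidden a \<theta>' l x"
proof (induction l)
  case 0 then show ?case by simp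
next
  case (Suc l)
  have mono: "layer_off a (Suc l) \<le> layer_off a (Suc (Suc l))" by (rule layer_off_mono) simp
  have IH: "hidden a \<theta> l x = hidden a \<theta>' l x" using Suc mono by auto
  have so: "layer_off a (Suc (Suc l)) = layer_off a (Suc l) + (a!Suc l * a!l + a!Suc l)"
    using layer_off_Suc[of "Suc l" a] by simp
  have "affine_layer a \<theta> (Suc l) z i = affine_layer a \<theta>' (Suc l) z i" for z i
  proof (cases "i < a!Suc l")
    case True
    have "\<theta> (layer_off a (Suc l) + i * a!l + j) = \<theta>' (layer_off a (Suc l) + i * a!l + j)" if "j < a!l" for j
      using Suc.prems idx_lt[OF True that] so by auto
    moreover have "\<theta> (layer_off a (Suc l) + a!Suc l * a!l + i) = \<theta>' (layer_off a (Suc l) + a!Suc l * a!l + i)"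
      using Suc.prems True so by auto
    ultimately show ?thesis using True by (simp add: affine_layer_def)
  qed (simp add: affine_layer_def)
  then show ?case using IH by simp
qed

lemma cube_ne: "cube d \<noteq> {}"
  unfolding cube_def by (simp add: PiE_eq_empty_iff)

lemma cube_bnd: "x \<in> cube d \<Longrightarrow> j < d \<Longrightarrow> \<bar>x j\<bar> \<le> 1"
  unfolding cube_def by (auto simp: PiE_iff)

lemma params_bnd: "\<theta> \<in> params a R \<Longrightarrow> 0 \<le> R \<Longrightarrow> \<bar>\<theta> k\<bar> \<le> R"
  unfolding params_def by (cases "k < nparams a") auto

lemma params_R: "\<theta> \<in> params a R \<Longrightarrow> 0 < nparams a \<Longrightarrow> 0 \<le> R"
  unfolding params_def by force

lemma nparams_pos:
  assumes "length a \<ge> 2" "\<forall>l<length a. 0 < a!l"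
  shows "0 < nparams a"
proof -
  have "0 < a!1 * a!(1-1) + a!1" using assms by auto
  moreover have "1 \<in> {1..<length a}" using assms by auto
  ultimately show ?thesis unfolding nparams_def
    by (metis (no_types, lifting) bot_nat_0.not_eq_extremum finite_atLeastLessThan sum_eq_0_iff)
qed

lemma norm_inf_ge:
  assumes "\<theta> \<in> params a R" "\<theta>' \<in> params a R" "0 < nparams a"
  shows "\<bar>\<theta> k - \<theta>' k\<bar> \<le> norm_inf a (\<lambda>i. \<theta> i - \<theta>' i)"
proof (cases "k < nparams a")
  case True then show ?thesis unfolding norm_inf_def by (intro Max_ge) auto
next
  case False
  then have "\<bar>\<theta> k - \<theta>' k\<bar> = 0" using assms unfolding params_def by auto
  also have "0 \<le> \<bar>\<theta> 0 - \<theta>' 0\<bar>" by simp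
  also have "\<dots> \<le> norm_inf a (\<lambda>i. \<theta> i - \<theta>' i)" unfolding norm_inf_def using assms(3) by (intro Max_ge) auto
  finally show ?thesis .
qed

lemma realize_lip_params:
  assumes arch: "length a \<ge> 2" "\<forall>l<length a. 0 < a!l"
    and th: "\<theta> \<in> params a R" "\<theta>' \<in> params a R" and x: "x \<in> cube (a!0)" "x' \<in> cube (a!0)"
    and dx: "\<And>j. j < a!0 \<Longrightarrow> \<bar>x j - x' j\<bar> \<le> \<delta>" and dt: "\<And>k. \<bar>\<theta> k - \<theta>' k\<bar> \<le> \<delta>"
  shows "\<bar>realize a \<theta> x - realize a \<theta>' x'\<bar> \<le> LC a R * \<delta>"
proof -
  have np: "0 < nparams a" by (rule nparams_pos[OF arch])
  have R: "0 \<le> R" by (rule params_R[OF th(1) np])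
  show ?thesis
    by (rule realize_lip[OF arch(1) _ R]) (use arch th x dx dt params_bnd[OF _ R] cube_bnd in auto)
qed

lemma LC_pos: "0 \<le> R \<Longrightarrow> 1 \<le> LC a R"
  unfolding LC_def by (rule Cb_ge1)

definition LipSet :: "nat list \<Rightarrow> real \<Rightarrow> real set" where
  "LipSet a R = {(SUP x\<in>cube (a!0). \<bar>realize a \<theta> x - realize a \<theta>' x\<bar>) / norm_inf a (\<lambda>i. \<theta> i - \<theta>' i)
       | \<theta> \<theta>'. \<theta> \<in> params a R \<and> \<theta>' \<in> params a R \<and> \<theta> \<noteq> \<theta>'}"

lemma LipSet_bdd:
  assumes arch: "length a \<ge> 2" "\<forall>l<length a. 0 < a!l"
  shows "\<forall>s\<in>LipSet a R. s \<le> LC a R"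
proof
  fix s assume "s \<in> LipSet a R"
  then obtain \<theta> \<theta>' where th: "\<theta> \<in> params a R" "\<theta>' \<in> params a R" "\<theta> \<noteq> \<theta>'" and
    s: "s = (SUP x\<in>cube (a!0). \<bar>realize a \<theta> x - realize a \<theta>' x\<bar>) / norm_inf a (\<lambda>i. \<theta> i - \<theta>' i)"
    unfolding LipSet_def by blast
  have np: "0 < nparams a" by (rule nparams_pos[OF arch])
  define \<delta> where "\<delta> = norm_inf a (\<lambda>i. \<theta> i - \<theta>' i)"
  have dk: "\<And>k. \<bar>\<theta> k - \<theta>' k\<bar> \<le> \<delta>" unfolding \<delta>_def by (rule norm_inf_ge[OF th(1,2) np])
  obtain k where "\<theta> k \<noteq> \<theta>' k" using th(3) by auto
  with dk[of k] have dpos: "0 < \<delta>" by linarith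
  have "(SUP x\<in>cube (a!0). \<bar>realize a \<theta> x - realize a \<theta>' x\<bar>) \<le> LC a R * \<delta>"
  proof (rule cSUP_least)
    show "cube (a!0) \<noteq> {}" by (rule cube_ne)
    fix x assume "x \<in> cube (a!0)"
    then show "\<bar>realize a \<theta> x - realize a \<theta>' x\<bar> \<le> LC a R * \<delta>"
      by (intro realize_lip_params[OF arch th(1,2)]) (use dk dpos in auto)
  qed
  then show "s \<le> LC a R" unfolding s \<delta>_def[symmetric] using dpos by (simp add: divide_le_eq)
qed

lemma Lip_ge1:
  assumes arch: "length a \<ge> 2" "\<forall>l<length a. 0 < a!l" "last a = 1" and R: "0 < R"
  shows "1 \<le> Lip_real a R"
proof -
  define L where "L = length a - 1"
  have L1: "1 \<le> L" "L < length a" using arch by (auto simp: L_def)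
  have "a \<noteq> []" using arch by auto
  then have aL: "a!L = 1" using arch by (simp add: L_def last_conv_nth)
  define b where "b = layer_off a L + a!L * a!(L-1)"
  have SL: "Suc L = length a" using L1 by (simp add: L_def)
  have np: "nparams a = layer_off a L + (a!L * a!(L-1) + a!L)"
    unfolding nparams_off SL[symmetric] by (rule layer_off_Suc[OF L1(1)])
  have bnp: "b < nparams a" using np aL by (simp add: b_def)
  define \<eta> where "\<eta> = min R 1"
  have eta: "0 < \<eta>" "\<eta> \<le> R" "\<eta> \<le> 1" using R by (auto simp: \<eta>_def)
  define \<theta>0 :: "nat \<Rightarrow> real" where "\<theta>0 = (\<lambda>_. 0)"
  define \<theta>1 :: "nat \<Rightarrow> real" where "\<theta>1 = (\<lambda>k. if k = b then \<eta> else 0)"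
  have p0: "\<theta>0 \<in> params a R" using R by (auto simp: params_def \<theta>0_def)
  have p1: "\<theta>1 \<in> params a R" using eta bnp by (auto simp: params_def \<theta>1_def)
  have ne: "\<theta>0 \<noteq> \<theta>1" using eta by (auto simp: \<theta>0_def \<theta>1_def fun_eq_iff)
  have aff0: "affine_layer a \<theta>0 l z i = 0" for l z i by (simp add: affine_layer_def \<theta>0_def)
  have len: "length a - 1 = Suc (length a - 2)" using arch by simp
  have r0: "realize a \<theta>0 x = 0" for x by (simp add: realize_def aff0 clip1_def)
  have Ls: "Suc (length a - 2) = L" using arch by (simp add: L_def)
  have hag: "hidden a \<theta>1 (length a - 2) x = hidden a \<theta>0 (length a - 2) x" for x
  proof (rule hidden_agree, intro allI impI)
    fix k assume "k < layer_off a (Suc (length a - 2))"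
    then have "k < b" unfolding Ls b_def by simp
    then show "\<theta>1 k = \<theta>0 k" by (simp add: \<theta>1_def \<theta>0_def)
  qed
  have r1: "realize a \<theta>1 x = \<eta>" for x
  proof -
    have "affine_layer a \<theta>1 L z 0 = \<eta>" for z
    proof -
      have "\<theta>1 (layer_off a L + 0 * a!(L-1) + j) = 0" if "j < a!(L-1)" for j
        using that aL by (simp add: \<theta>1_def b_def)
      moreover have "\<theta>1 (layer_off a L + a!L * a!(L-1) + 0) = \<eta>" by (simp add: \<theta>1_def b_def)
      ultimately show ?thesis using aL by (simp add: affine_layer_def)
    qed
    then show ?thesis using eta unfolding realize_def L_def by (simp add: clip1_def)
  qed
  have ninf: "norm_inf a (\<lambda>i. \<theta>0 i - \<theta>1 i) = \<eta>"
    unfolding norm_inf_def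
  proof (rule Max_eqI)
    show "finite ((\<lambda>i. \<bar>\<theta>0 i - \<theta>1 i\<bar>) ` {..<nparams a})" by simp
    show "y \<le> \<eta>" if "y \<in> (\<lambda>i. \<bar>\<theta>0 i - \<theta>1 i\<bar>) ` {..<nparams a}" for y
      using that eta by (auto simp: \<theta>0_def \<theta>1_def)
    show "\<eta> \<in> (\<lambda>i. \<bar>\<theta>0 i - \<theta>1 i\<bar>) ` {..<nparams a}"
      using bnp eta by (auto simp: \<theta>0_def \<theta>1_def image_iff intro!: bexI[of _ b])
  qed
  have "(SUP x\<in>cube (a!0). \<bar>realize a \<theta>0 x - realize a \<theta>1 x\<bar>) = \<eta>"
    using eta by (simp add: r0 r1 cube_ne)
  then have "1 = (SUP x\<in>cube (a!0). \<bar>realize a \<theta>0 x - realize a \<theta>1 x\<bar>) / norm_inf a (\<lambda>i. \<theta>0 i - \<theta>1 i)"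
    using ninf eta by simp
  then have "1 \<in> LipSet a R"
    unfolding LipSet_def using p0 p1 ne by blast
  moreover have "bdd_above (LipSet a R)" using LipSet_bdd[OF arch(1,2)] by (auto simp: bdd_above_def)
  ultimately have "1 \<le> Sup (LipSet a R)" by (rule cSup_upper)
  then show ?thesis unfolding Lip_real_def LipSet_def .
qed



lemma unit_prob: "prob_space (restrict_space lborel {0..1::real})"
  by (rule prob_space_restrict_space) auto

lemma unit_prod: "product_sigma_finite (\<lambda>_::nat. restrict_space lborel {0..1::real})"
  unfolding product_sigma_finite_def
  using prob_space_imp_sigma_finite[OF unit_prob] by blast

lemma pos_box:
  assumes x0: "x0 \<in> cube d" and eta: "0 < \<eta>"
  defines "U \<equiv> PiE {..<d} (\<lambda>j. {max 0 (x0 j - \<eta>) .. min 1 (x0 j + \<eta>)})"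
  shows "U \<in> sets (cube_measure d)" "emeasure (cube_measure d) U \<noteq> 0"
proof -
  interpret P: product_sigma_finite "\<lambda>_::nat. restrict_space lborel {0..1::real}" by (rule unit_prod)
  have x0j: "x0 j \<in> {0..1}" if "j < d" for j using x0 that by (auto simp: cube_def PiE_iff)
  have sub: "{max 0 (x0 j - \<eta>) .. min 1 (x0 j + \<eta>)} \<subseteq> {0..1}" for j by auto
  have ms: "{max 0 (x0 j - \<eta>) .. min 1 (x0 j + \<eta>)} \<in> sets (restrict_space lborel {0..1::real})" for j
    using sub by (simp add: sets_restrict_space_iff)
  show "U \<in> sets (cube_measure d)" unfolding U_def cube_measure_def
    by (rule sets_PiM_I_finite) (use ms in auto)
  have "emeasure (cube_measure d) U = (\<Prod>j<d. emeasure (restrict_space lborel {0..1::real}) {max 0 (x0 j - \<eta>) .. min 1 (x0 j + \<eta>)})"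
    unfolding U_def cube_measure_def by (rule P.emeasure_PiM) (use ms in auto)
  also have "\<dots> = (\<Prod>j<d. ennreal (min 1 (x0 j + \<eta>) - max 0 (x0 j - \<eta>)))"
  proof (rule prod.cong[OF refl])
    fix j assume j: "j \<in> {..<d}"
    have le: "max 0 (x0 j - \<eta>) \<le> min 1 (x0 j + \<eta>)" using x0j[of j] j eta by auto
    show "emeasure (restrict_space lborel {0..1::real}) {max 0 (x0 j - \<eta>) .. min 1 (x0 j + \<eta>)} = ennreal (min 1 (x0 j + \<eta>) - max 0 (x0 j - \<eta>))"
      using sub[of j] le by (simp add: emeasure_restrict_space)
  qed
  also have "\<dots> \<noteq> 0"
  proof -
    have "ennreal (min 1 (x0 j + \<eta>) - max 0 (x0 j - \<eta>)) \<noteq> 0" if "j < d" for j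
    proof -
      have "0 < min 1 (x0 j + \<eta>) - max 0 (x0 j - \<eta>)" using x0j[OF that] eta by auto
      then show ?thesis by (simp only: ennreal_eq_0_iff not_le)
    qed
    then show ?thesis by simp
  qed
  finally show "emeasure (cube_measure d) U \<noteq> 0" .
qed

lemma aux_gap:
  fixes u u0 v v0 e c :: real
  assumes "\<bar>u - u0\<bar> \<le> e" "\<bar>v - v0\<bar> \<le> e" "e = (\<bar>u0 - v0\<bar> - c) / 4" "0 < \<bar>u0 - v0\<bar> - c"
  shows "\<not> \<bar>u - v\<bar> \<le> c"
  using assms by (auto simp: abs_if split: if_split_asm)

lemma ae_pointwise:
  assumes arch: "length a \<ge> 2" "\<forall>l<length a. 0 < a!l"
    and th: "\<theta> \<in> params a R" "\<theta>' \<in> params a R"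
    and ae: "AE x in cube_measure (a!0). \<bar>realize a \<theta> x - realize a \<theta>' x\<bar> \<le> c"
    and x0: "x0 \<in> cube (a!0)"
  shows "\<bar>realize a \<theta> x0 - realize a \<theta>' x0\<bar> \<le> c"
proof (rule ccontr)
  assume nt: "\<not> ?thesis"
  define g where "g = \<bar>realize a \<theta> x0 - realize a \<theta>' x0\<bar> - c"
  have g: "0 < g" using nt by (simp add: g_def)
  have np: "0 < nparams a" by (rule nparams_pos[OF arch])
  have R: "0 \<le> R" by (rule params_R[OF th(1) np])
  have LC: "1 \<le> LC a R" by (rule LC_pos[OF R])
  define \<eta> where "\<eta> = g / (4 * LC a R)"
  have eta: "0 < \<eta>" using g LC by (simp add: \<eta>_def)
  have LCeta: "LC a R * \<eta> = g / 4" using LC by (simp add: \<eta>_def)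
  define U where "U = PiE {..<a!0} (\<lambda>j. {max 0 (x0 j - \<eta>) .. min 1 (x0 j + \<eta>)})"
  have U: "U \<in> sets (cube_measure (a!0))" "emeasure (cube_measure (a!0)) U \<noteq> 0"
    using pos_box[OF x0 eta] unfolding U_def by auto
  have sub: "U \<subseteq> {x \<in> space (cube_measure (a!0)). \<not> \<bar>realize a \<theta> x - realize a \<theta>' x\<bar> \<le> c}"
  proof
    fix x assume xU: "x \<in> U"
    have xc: "x \<in> cube (a!0)" using xU unfolding U_def cube_def by (auto simp: PiE_iff)
    have dx: "\<bar>x j - x0 j\<bar> \<le> \<eta>" if "j < a!0" for j
    proof -
      have "x j \<in> {max 0 (x0 j - \<eta>) .. min 1 (x0 j + \<eta>)}" using xU that unfolding U_def by (auto simp: PiE_iff)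
      then show ?thesis by (auto simp: abs_le_iff)
    qed
    have "\<bar>realize a \<theta> x - realize a \<theta> x0\<bar> \<le> LC a R * \<eta>"
      by (rule realize_lip_params[OF arch th(1) th(1) xc x0]) (use dx eta in auto)
    moreover have "\<bar>realize a \<theta>' x - realize a \<theta>' x0\<bar> \<le> LC a R * \<eta>"
      by (rule realize_lip_params[OF arch th(2) th(2) xc x0]) (use dx eta in auto)
    ultimately have "\<not> \<bar>realize a \<theta> x - realize a \<theta>' x\<bar> \<le> c" using LCeta g unfolding g_def by (intro aux_gap)
    then show "x \<in> {x \<in> space (cube_measure (a!0)). \<not> \<bar>realize a \<theta> x - realize a \<theta>' x\<bar> \<le> c}"
      using xc by (simp add: space_cube)
  qed
  from ae obtain N where N: "{x \<in> space (cube_measure (a!0)). \<not> \<bar>realize a \<theta> x - realize a \<theta>' x\<bar> \<le> c} \<subseteq> N"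
    "emeasure (cube_measure (a!0)) N = 0" "N \<in> sets (cube_measure (a!0))" by (rule AE_E)
  have "emeasure (cube_measure (a!0)) U \<le> emeasure (cube_measure (a!0)) N"
    by (rule emeasure_mono) (use sub N in auto)
  then show False using N U by simp
qed



lemma restrict_realize_meas:
  assumes "length a \<ge> 2"
  shows "(\<lambda>x. ereal \<bar>restrict (realize a \<theta>) (cube (a!0)) x - realize a \<theta>' x\<bar>) \<in> borel_measurable (cube_measure (a!0))"
proof -
  have "(\<lambda>x. ereal \<bar>realize a \<theta> x - realize a \<theta>' x\<bar>) \<in> borel_measurable (cube_measure (a!0))"
    using realize_meas[OF assms, of \<theta>] realize_meas[OF assms, of \<theta>'] by measurable
  then show ?thesis by (rule measurable_cong[THEN iffD1, rotated]) (simp add: space_cube)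
qed

definition CovP :: "nat list \<Rightarrow> real \<Rightarrow> real \<Rightarrow> nat \<Rightarrow> bool" where
  "CovP a R \<epsilon> N \<longleftrightarrow> (\<exists>g :: nat \<Rightarrow> (nat \<Rightarrow> real) \<Rightarrow> real.
      (\<forall>j<N. g j \<in> borel_measurable (cube_measure (a!0))
             \<and> esssup (cube_measure (a!0)) (\<lambda>x. ereal \<bar>g j x\<bar>) < \<infinity>)
    \<and> (\<forall>f\<in>NN a R. \<exists>j<N. esssup (cube_measure (a!0)) (\<lambda>x. ereal \<bar>f x - g j x\<bar>) \<le> ereal \<epsilon>))"

lemma Cov_inf_Least: "Cov_inf a R \<epsilon> = (LEAST N. CovP a R \<epsilon> N)"
  unfolding Cov_inf_def CovP_def ..

lemma cov_exists:
  assumes arch: "length a \<ge> 2" "\<forall>l<length a. 0 < a!l" and R: "0 \<le> R" and eps: "0 < \<epsilon>"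
  shows "\<exists>N. CovP a R \<epsilon> N"
proof -
  define P where "P = nparams a"
  have LC: "1 \<le> LC a R" by (rule LC_pos[OF R])
  define \<eta> where "\<eta> = \<epsilon> / LC a R"
  have eta: "0 < \<eta>" using LC eps by (simp add: \<eta>_def)
  define m where "m = nat \<lceil>2 * R / \<eta>\<rceil>"
  define kk where "kk = (\<lambda>(\<theta>::nat\<Rightarrow>real) i. nat \<lfloor>(\<theta> i + R) / \<eta>\<rfloor>)"
  define emb where "emb = (\<lambda>(v::nat\<Rightarrow>nat) i. if i < P then -R + real (v i) * \<eta> else (0::real))"
  define rnd where "rnd = (\<lambda>\<theta>. emb (kk \<theta>))"
  have rnd_prop: "\<bar>rnd \<theta> k\<bar> \<le> R \<and> \<bar>\<theta> k - rnd \<theta> k\<bar> \<le> \<eta>" if th: "\<theta> \<in> params a R" for \<theta> k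
  proof (cases "k < P")
    case True
    have b: "\<bar>\<theta> k\<bar> \<le> R" using th True by (auto simp: params_def P_def)
    define y where "y = (\<theta> k + R) / \<eta>"
    have y0: "0 \<le> y" using b eta by (simp add: y_def)
    have fl: "real (nat \<lfloor>y\<rfloor>) = of_int \<lfloor>y\<rfloor>" using y0 by simp
    have f1: "of_int \<lfloor>y\<rfloor> \<le> y" "y < of_int \<lfloor>y\<rfloor> + 1" by linarith+
    have f2: "0 \<le> of_int \<lfloor>y\<rfloor> * \<eta>" using y0 eta by simp
    have "of_int \<lfloor>y\<rfloor> * \<eta> \<le> y * \<eta>" using f1 eta by (intro mult_right_mono) auto
    moreover have "y * \<eta> < (of_int \<lfloor>y\<rfloor> + 1) * \<eta>" using f1 eta by (intro mult_strict_right_mono) auto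
    moreover have "y * \<eta> = \<theta> k + R" using eta by (simp add: y_def)
    ultimately have "of_int \<lfloor>y\<rfloor> * \<eta> \<le> \<theta> k + R" "\<theta> k + R < of_int \<lfloor>y\<rfloor> * \<eta> + \<eta>"
      by (auto simp: algebra_simps)
    moreover have "rnd \<theta> k = -R + of_int \<lfloor>y\<rfloor> * \<eta>"
      using True fl by (simp add: rnd_def emb_def kk_def y_def)
    ultimately show ?thesis using b f2 by (auto simp: abs_le_iff)
  next
    case False
    then show ?thesis using th R eta by (auto simp: rnd_def emb_def params_def P_def)
  qed
  have rnd_par: "rnd \<theta> \<in> params a R" if "\<theta> \<in> params a R" for \<theta>
  proof -
    have "\<forall>i<nparams a. \<bar>rnd \<theta> i\<bar> \<le> R" using rnd_prop[OF that] by blast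
    moreover have "\<forall>i\<ge>nparams a. rnd \<theta> i = 0" by (simp add: rnd_def emb_def P_def)
    ultimately show ?thesis unfolding params_def by blast
  qed
  have kk_in: "kk \<theta> i \<le> m" if th: "\<theta> \<in> params a R" "i < P" for \<theta> i
  proof -
    have b: "\<bar>\<theta> i\<bar> \<le> R" using th by (auto simp: params_def P_def)
    have "(\<theta> i + R) / \<eta> \<le> 2 * R / \<eta>" using b eta by (intro divide_right_mono) auto
    then have "\<lfloor>(\<theta> i + R) / \<eta>\<rfloor> \<le> \<lceil>2 * R / \<eta>\<rceil>" by (meson floor_le_ceiling floor_mono order_trans)
    then show ?thesis unfolding kk_def m_def by simp
  qed
  have Gsub: "rnd ` params a R \<subseteq> (\<lambda>v. emb (restrict v {..<P})) ` (PiE {..<P} (\<lambda>_. {..m}))"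
  proof
    fix \<phi> assume "\<phi> \<in> rnd ` params a R"
    then obtain \<theta> where th: "\<theta> \<in> params a R" and ph: "\<phi> = rnd \<theta>" by (rule imageE)
    have "restrict (kk \<theta>) {..<P} \<in> PiE {..<P} (\<lambda>_. {..m})" by (simp add: restrict_PiE_iff kk_in[OF th])
    moreover have "emb (restrict (restrict (kk \<theta>) {..<P}) {..<P}) = rnd \<theta>"
      by (rule ext) (simp add: emb_def rnd_def)
    ultimately show "\<phi> \<in> (\<lambda>v. emb (restrict v {..<P})) ` (PiE {..<P} (\<lambda>_. {..m}))"
      unfolding ph by (intro image_eqI[where x="restrict (kk \<theta>) {..<P}"]) auto
  qed
  have finG: "finite (rnd ` params a R)"
    by (rule finite_subset[OF Gsub]) (intro finite_imageI finite_PiE finite_lessThan finite_atMost)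
  from finite_imp_nat_seg_image_inj_on[OF finG] obtain N :: nat and h where Nh: "rnd ` params a R = h ` {i. i < N}"
    by blast
  define g where "g = (\<lambda>j. realize a (h j))"
  show ?thesis unfolding CovP_def
  proof (intro exI[of _ N] exI[of _ g] conjI)
   show "\<forall>j<N. g j \<in> borel_measurable (cube_measure (a!0))
             \<and> esssup (cube_measure (a!0)) (\<lambda>x. ereal \<bar>g j x\<bar>) < \<infinity>"
   proof (intro allI impI conjI)
    fix j assume j: "j < N"
    show gm: "g j \<in> borel_measurable (cube_measure (a!0))" unfolding g_def by (rule realize_meas[OF arch(1)])
    have "esssup (cube_measure (a!0)) (\<lambda>x. ereal \<bar>g j x\<bar>) \<le> 1"
    proof (rule esssup_I)
      show "(\<lambda>x. ereal \<bar>g j x\<bar>) \<in> borel_measurable (cube_measure (a!0))" using gm by measurable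
      show "AE x in cube_measure (a!0). ereal \<bar>g j x\<bar> \<le> 1"
        by (intro AE_I2) (simp add: g_def realize_def clip_lip(2))
    qed
    then show "esssup (cube_measure (a!0)) (\<lambda>x. ereal \<bar>g j x\<bar>) < \<infinity>"
      by (rule order.strict_trans1) simp
   qed
   show "\<forall>f\<in>NN a R. \<exists>j<N. esssup (cube_measure (a!0)) (\<lambda>x. ereal \<bar>f x - g j x\<bar>) \<le> ereal \<epsilon>"
   proof
    fix f assume "f \<in> NN a R"
    then obtain \<theta> where th: "\<theta> \<in> params a R" and f: "f = restrict (realize a \<theta>) (cube (a!0))"
      unfolding NN_def by auto
    have "rnd \<theta> \<in> h ` {i. i < N}" using th Nh by blast
    then obtain j where j: "j < N" and hj: "h j = rnd \<theta>" by auto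
    have pt: "\<bar>f x - g j x\<bar> \<le> \<epsilon>" if "x \<in> space (cube_measure (a!0))" for x
    proof -
      have xc: "x \<in> cube (a!0)" using that by (simp add: space_cube)
      have "\<bar>realize a \<theta> x - realize a (rnd \<theta>) x\<bar> \<le> LC a R * \<eta>"
        by (rule realize_lip_params[OF arch th rnd_par[OF th] xc xc]) (use rnd_prop[OF th] eta in auto)
      also have "LC a R * \<eta> = \<epsilon>" using LC by (simp add: \<eta>_def)
      finally show ?thesis using xc by (simp add: f g_def hj)
    qed
    have "esssup (cube_measure (a!0)) (\<lambda>x. ereal \<bar>f x - g j x\<bar>) \<le> ereal \<epsilon>"
    proof (rule esssup_I)
      show "(\<lambda>x. ereal \<bar>f x - g j x\<bar>) \<in> borel_measurable (cube_measure (a!0))"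
        unfolding f g_def by (rule restrict_realize_meas[OF arch(1)])
      show "AE x in cube_measure (a!0). ereal \<bar>f x - g j x\<bar> \<le> ereal \<epsilon>"
        by (intro AE_I2) (use pt in simp)
    qed
    then show "\<exists>j<N. esssup (cube_measure (a!0)) (\<lambda>x. ereal \<bar>f x - g j x\<bar>) \<le> ereal \<epsilon>" using j by blast
   qed
  qed
qed



lemma space_rho:
  assumes "sets \<rho> = sets (cube_measure d \<Otimes>\<^sub>M count_space {-1, 1::real})" "w \<in> space \<rho>"
  shows "fst w \<in> cube d" "snd w \<in> {-1, 1}"
proof -
  have "space \<rho> = space (cube_measure d \<Otimes>\<^sub>M count_space {-1, 1::real})" by (rule sets_eq_imp_space_eq[OF assms(1)])
  then have "w \<in> cube d \<times> {-1, 1}" using assms(2) by (simp add: space_pair_measure space_cube)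
  then show "fst w \<in> cube d" "snd w \<in> {-1, 1}" by auto
qed

lemma loss_lip:
  fixes u v y :: real
  assumes "\<bar>u\<bar> \<le> 1" "\<bar>v\<bar> \<le> 1" "\<bar>y\<bar> \<le> 1"
  shows "\<bar>(u - y)\<^sup>2 - (v - y)\<^sup>2\<bar> \<le> 4 * \<bar>u - v\<bar>" "(u - y)\<^sup>2 \<le> 4" "0 \<le> (u - y)\<^sup>2"
proof -
  have "(u - y)\<^sup>2 - (v - y)\<^sup>2 = (u - v) * (u + v - 2 * y)" by (simp add: power2_eq_square algebra_simps)
  then have "\<bar>(u - y)\<^sup>2 - (v - y)\<^sup>2\<bar> = \<bar>u - v\<bar> * \<bar>u + v - 2 * y\<bar>" by (simp add: abs_mult)
  also have "\<dots> \<le> \<bar>u - v\<bar> * 4" using assms by (intro mult_left_mono) auto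
  finally show "\<bar>(u - y)\<^sup>2 - (v - y)\<^sup>2\<bar> \<le> 4 * \<bar>u - v\<bar>" by simp
  have "\<bar>u - y\<bar> \<le> 2" using assms by auto
  then have "\<bar>u - y\<bar>\<^sup>2 \<le> 2\<^sup>2" by (intro power_mono) auto
  then show "(u - y)\<^sup>2 \<le> 4" by simp
qed simp

lemma int_close:
  fixes f g :: "'a \<Rightarrow> real"
  assumes "prob_space M" "f \<in> borel_measurable M" "g \<in> borel_measurable M"
    "\<And>x. x \<in> space M \<Longrightarrow> \<bar>f x\<bar> \<le> B" "\<And>x. x \<in> space M \<Longrightarrow> \<bar>g x\<bar> \<le> B"
    "\<And>x. x \<in> space M \<Longrightarrow> \<bar>f x - g x\<bar> \<le> c"
  shows "\<bar>(\<integral>x. f x \<partial>M) - (\<integral>x. g x \<partial>M)\<bar> \<le> c"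
proof -
  interpret prob_space M by fact
  have fi: "integrable M f" by (rule integrable_const_bound[where B=B]) (use assms in auto)
  have gi: "integrable M g" by (rule integrable_const_bound[where B=B]) (use assms in auto)
  have "(\<integral>x. f x \<partial>M) - (\<integral>x. g x \<partial>M) = (\<integral>x. f x - g x \<partial>M)" using fi gi by simp
  moreover have "(\<integral>x. f x - g x \<partial>M) \<le> c"
    by (rule integral_le_const) (use fi gi in \<open>auto intro!: AE_I2 dest!: assms(6) simp: abs_le_iff\<close>)
  moreover have "-c \<le> (\<integral>x. f x - g x \<partial>M)"
    by (rule integral_ge_const) (use fi gi in \<open>auto intro!: AE_I2 dest!: assms(6) simp: abs_le_iff\<close>)
  ultimately show ?thesis by linarith
qed

lemma int_bounds:
  fixes f :: "'a \<Rightarrow> real"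
  assumes "prob_space M" "f \<in> borel_measurable M" "\<And>x. x \<in> space M \<Longrightarrow> \<bar>f x\<bar> \<le> B"
  shows "integrable M f"
proof -
  interpret prob_space M by fact
  show ?thesis by (rule integrable_const_bound[where B=B]) (use assms in auto)
qed

lemma params_PiE: "params a R = PiE UNIV (\<lambda>i. if i < nparams a then {-R..R} else {0})"
proof (rule set_eqI)
  fix \<theta> :: "nat \<Rightarrow> real"
  have "\<theta> \<in> params a R \<longleftrightarrow> (\<forall>i. \<theta> i \<in> (if i < nparams a then {-R..R} else {0}))"
  proof
    assume "\<theta> \<in> params a R"
    then show "\<forall>i. \<theta> i \<in> (if i < nparams a then {-R..R} else {0})"
      unfolding params_def by (auto simp: abs_le_iff)
  next
    assume H: "\<forall>i. \<theta> i \<in> (if i < nparams a then {-R..R} else {0})"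
    have "\<bar>\<theta> i\<bar> \<le> R" if "i < nparams a" for i using H[rule_format, of i] that by (simp add: abs_le_iff)
    moreover have "\<theta> i = 0" if "\<not> i < nparams a" for i using H[rule_format, of i] that by simp
    ultimately show "\<theta> \<in> params a R" unfolding params_def by auto
  qed
  then show "\<theta> \<in> params a R \<longleftrightarrow> \<theta> \<in> PiE UNIV (\<lambda>i. if i < nparams a then {-R..R} else {0})"
    by (simp add: PiE_iff)
qed

lemma params_compact: "compact (params a R)"
proof -
  have "compactin (product_topology (\<lambda>_. euclidean) UNIV) (params a R)"
    unfolding params_PiE compactin_PiE by auto
  then show ?thesis by (simp add: euclidean_product_topology)
qed

lemma pop_cont:
  assumes arch: "length a \<ge> 2" "\<forall>l<length a. 0 < a!l" "a!0 = d"
    and rho: "prob_space \<rho>" "sets \<rho> = sets (cube_measure d \<Otimes>\<^sub>M count_space {-1, 1::real})"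
    and p: "0 < p" and lam: "0 \<le> lam"
  shows "continuous_on (params a R) (pop_risk a p lam \<rho>)"
  unfolding continuous_on_def
proof
  fix \<theta> assume th: "\<theta> \<in> params a R"
  let ?F = "at \<theta> within params a R"
  define B where "B = (\<lambda>\<phi>::nat\<Rightarrow>real. 4 * LC a R * (\<Sum>i<nparams a. \<bar>\<phi> i - \<theta> i\<bar>)
       + lam / 2 * \<bar>norm_pp a p \<phi> - norm_pp a p \<theta>\<bar>)"
  have coord: "((\<lambda>\<phi>::nat\<Rightarrow>real. \<phi> i) \<longlongrightarrow> \<theta> i) ?F" for i
  proof -
    have "continuous_on UNIV (\<lambda>\<phi>::nat\<Rightarrow>real. \<phi> i)" by simp
    then have "((\<lambda>\<phi>::nat\<Rightarrow>real. \<phi> i) \<longlongrightarrow> \<theta> i) (at \<theta>)"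
      by (simp add: continuous_on_def)
    then show ?thesis by (rule tendsto_within_subset) simp
  qed
  have npp: "((\<lambda>\<phi>. norm_pp a p \<phi>) \<longlongrightarrow> norm_pp a p \<theta>) ?F"
    unfolding norm_pp_def
    by (intro tendsto_sum tendsto_powr' tendsto_rabs coord tendsto_const) (use p in auto)
  have "(B \<longlongrightarrow> B \<theta>) ?F"
    unfolding B_def by (intro tendsto_intros coord npp)
  moreover have "B \<theta> = 0" by (simp add: B_def)
  ultimately have B0: "(B \<longlongrightarrow> 0) ?F" by simp
  have bnd: "\<bar>pop_risk a p lam \<rho> \<phi> - pop_risk a p lam \<rho> \<theta>\<bar> \<le> B \<phi>" if ph: "\<phi> \<in> params a R" for \<phi>
  proof -
    have np: "0 < nparams a" by (rule nparams_pos[OF arch(1,2)])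
    define \<delta> where "\<delta> = (\<Sum>i<nparams a. \<bar>\<phi> i - \<theta> i\<bar>)"
    have dk: "\<bar>\<phi> k - \<theta> k\<bar> \<le> \<delta>" for k
    proof (cases "k < nparams a")
      case True
      then show ?thesis unfolding \<delta>_def
        by (intro member_le_sum[where f="\<lambda>i. \<bar>\<phi> i - \<theta> i\<bar>"]) auto
    next
      case False
      then show ?thesis using ph th unfolding \<delta>_def params_def by (auto intro: sum_nonneg)
    qed
    have d0: "0 \<le> \<delta>" using dk[of 0] by linarith
    have lp: "\<bar>(realize a \<phi> (fst w) - snd w)\<^sup>2 - (realize a \<theta> (fst w) - snd w)\<^sup>2\<bar> \<le> 4 * LC a R * \<delta>"
      if w: "w \<in> space \<rho>" for w
    proof -
      have c: "fst w \<in> cube (a!0)" "snd w \<in> {-1,1}" using space_rho[OF rho(2) w] arch(3) by auto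
      have "\<bar>(realize a \<phi> (fst w) - snd w)\<^sup>2 - (realize a \<theta> (fst w) - snd w)\<^sup>2\<bar>
          \<le> 4 * \<bar>realize a \<phi> (fst w) - realize a \<theta> (fst w)\<bar>"
        by (rule loss_lip) (use c in \<open>auto simp: realize_def clip_lip(2)\<close>)
      also have "\<dots> \<le> 4 * (LC a R * \<delta>)"
        by (intro mult_left_mono realize_lip_params[OF arch(1,2) ph th c(1) c(1)]) (use dk d0 in auto)
      finally show ?thesis by simp
    qed
    have lb: "\<bar>(realize a \<psi> (fst w) - snd w)\<^sup>2\<bar> \<le> 4" if w: "w \<in> space \<rho>" for w \<psi>
    proof -
      have c: "snd w \<in> {-1,1}" using space_rho[OF rho(2) w] by auto
      show ?thesis using loss_lip(2)[OF clip_lip(2) clip_lip(2), of "snd w"] c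
        by (auto simp: realize_def)
    qed
    have "\<bar>(\<integral>w. (realize a \<phi> (fst w) - snd w)\<^sup>2 \<partial>\<rho>) - (\<integral>w. (realize a \<theta> (fst w) - snd w)\<^sup>2 \<partial>\<rho>)\<bar> \<le> 4 * LC a R * \<delta>"
      by (rule int_close[OF rho(1)]) (use loss_meas[OF arch(1,3) rho(2)] lb lp in auto)
    moreover have "lam / 2 * norm_pp a p \<phi> - lam / 2 * norm_pp a p \<theta> = lam / 2 * (norm_pp a p \<phi> - norm_pp a p \<theta>)"
      by (simp add: algebra_simps)
    moreover have "\<bar>lam / 2 * (norm_pp a p \<phi> - norm_pp a p \<theta>)\<bar> = lam / 2 * \<bar>norm_pp a p \<phi> - norm_pp a p \<theta>\<bar>"
      using lam by (simp add: abs_mult)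
    ultimately show ?thesis unfolding pop_risk_def B_def \<delta>_def by linarith
  qed
  have "((\<lambda>\<phi>. pop_risk a p lam \<rho> \<phi> - pop_risk a p lam \<rho> \<theta>) \<longlongrightarrow> 0) ?F"
  proof (rule Lim_null_comparison[OF _ B0])
    show "\<forall>\<^sub>F \<phi> in ?F. norm (pop_risk a p lam \<rho> \<phi> - pop_risk a p lam \<rho> \<theta>) \<le> B \<phi>"
      using bnd by (auto simp: eventually_at_filter)
  qed
  then show "(pop_risk a p lam \<rho> \<longlongrightarrow> pop_risk a p lam \<rho> \<theta>) ?F" by (simp add: LIM_zero_iff)
qed

lemma argmin_ne:
  assumes arch: "length a \<ge> 2" "\<forall>l<length a. 0 < a!l" "a!0 = d"
    and rho: "prob_space \<rho>" "sets \<rho> = sets (cube_measure d \<Otimes>\<^sub>M count_space {-1, 1::real})"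
    and p: "0 < p" and lam: "0 \<le> lam" and ne: "params a R \<noteq> {}"
  shows "argmin_on (params a R) (pop_risk a p lam \<rho>) \<noteq> {}"
  using continuous_attains_inf[OF params_compact ne pop_cont[OF arch rho p lam]]
  unfolding argmin_on_def by blast



lemma coords_indep:
  fixes n :: nat
  assumes rho: "prob_space \<rho>" and n: "0 < n"
  shows "prob_space.indep_vars (PiM {..<n} (\<lambda>_. \<rho>)) (\<lambda>_. \<rho>) (\<lambda>i z. z i) {..<n}"
proof -
  let ?M = "PiM {..<n} (\<lambda>_. \<rho>)"
  interpret P: prob_space ?M by (rule prob_space_PiM) (use rho in auto)
  show ?thesis
  proof (subst P.indep_vars_iff_distr_eq_PiM')
    show "{..<n} \<noteq> {}" using n by auto
    fix i assume "i \<in> {..<(n::nat)}"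
    then show "(\<lambda>z. z i) \<in> measurable ?M \<rho>" by (rule measurable_component_singleton)
  next
    have "distr ?M ?M (\<lambda>x. \<lambda>i\<in>{..<n}. x i) = distr ?M ?M (\<lambda>x. x)"
      by (rule distr_cong) (auto simp: space_PiM PiE_def extensional_restrict)
    also have "\<dots> = ?M" by simp
    also have "?M = (\<Pi>\<^sub>M i\<in>{..<n}. distr ?M \<rho> (\<lambda>z. z i))"
      by (rule PiM_cong) (use distr_PiM_component[of "{..<n}" "\<lambda>_. \<rho>"] rho in auto)
    finally show "distr ?M ?M (\<lambda>x. \<lambda>i\<in>{..<n}. x i) = (\<Pi>\<^sub>M i\<in>{..<n}. distr ?M \<rho> (\<lambda>z. z i))" .
  qed
qed

lemma hoeff:
  fixes lo :: "'a \<Rightarrow> real"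
  assumes rho: "prob_space \<rho>" and n: "0 < n" and lm: "lo \<in> borel_measurable \<rho>"
    and lb: "\<And>w. w \<in> space \<rho> \<Longrightarrow> 0 \<le> lo w \<and> lo w \<le> 4" and u: "0 \<le> u"
  shows "measure (PiM {..<n} (\<lambda>_. \<rho>)) {z \<in> space (PiM {..<n} (\<lambda>_. \<rho>)).
            (\<Sum>i<n. lo (z i)) \<le> real n * (\<integral>w. lo w \<partial>\<rho>) - real n * u} \<le> exp (- real n * u\<^sup>2 / 8)"
    "measure (PiM {..<n} (\<lambda>_. \<rho>)) {z \<in> space (PiM {..<n} (\<lambda>_. \<rho>)).
            (\<Sum>i<n. lo (z i)) \<ge> real n * (\<integral>w. lo w \<partial>\<rho>) + real n * u} \<le> exp (- real n * u\<^sup>2 / 8)"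
proof -
  let ?M = "PiM {..<n} (\<lambda>_. \<rho>)"
  interpret P: prob_space ?M by (rule prob_space_PiM) (use rho in auto)
  have ind: "P.indep_vars (\<lambda>_. borel) (\<lambda>i z. lo (z i)) {..<n}"
    by (rule P.indep_vars_compose2[OF coords_indep[OF rho n]]) (use lm in auto)
  have ae: "AE z in ?M. lo (z i) \<in> {0..4}" if "i \<in> {..<n}" for i
  proof (rule AE_I2)
    fix z assume "z \<in> space ?M"
    then have "z i \<in> space \<rho>" using that by (auto simp: space_PiM PiE_iff)
    then show "lo (z i) \<in> {0..4}" using lb by auto
  qed
  interpret H: Hoeffding_ineq ?M "{..<n}" "\<lambda>i z. lo (z i)" "\<lambda>_. 0" "\<lambda>_. 4" "\<Sum>i<n. P.expectation (\<lambda>z. lo (z i))"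
    by unfold_locales (use ind ae in auto)
  have ex: "P.expectation (\<lambda>z. lo (z i)) = (\<integral>w. lo w \<partial>\<rho>)" if "i < n" for i
  proof -
    have "(\<integral>w. lo w \<partial>\<rho>) = (\<integral>w. lo w \<partial>(distr ?M \<rho> (\<lambda>z. z i)))"
      using distr_PiM_component[of "{..<n}" "\<lambda>_. \<rho>" i] that rho by simp
    also have "\<dots> = P.expectation (\<lambda>z. lo (z i))"
      by (rule integral_distr) (use that lm in \<open>auto intro: measurable_component_singleton\<close>)
    finally show ?thesis by simp
  qed
  have mu: "(\<Sum>i<n. P.expectation (\<lambda>z. lo (z i))) = real n * (\<integral>w. lo w \<partial>\<rho>)"
    using ex by simp
  have pos: "(\<Sum>i<n. ((4::real) - 0)\<^sup>2) > 0" using n by simp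
  have eq: "-2 * (real n * u)\<^sup>2 / (\<Sum>i<n. ((4::real) - 0)\<^sup>2) = - real n * u\<^sup>2 / 8"
    using n by (simp add: power2_eq_square field_simps)
  have nu: "0 \<le> real n * u" using u by simp
  show "measure ?M {z \<in> space ?M. (\<Sum>i<n. lo (z i)) \<le> real n * (\<integral>w. lo w \<partial>\<rho>) - real n * u} \<le> exp (- real n * u\<^sup>2 / 8)"
    using H.Hoeffding_ineq_le[OF nu pos] unfolding mu eq .
  show "measure ?M {z \<in> space ?M. (\<Sum>i<n. lo (z i)) \<ge> real n * (\<integral>w. lo w \<partial>\<rho>) + real n * u} \<le> exp (- real n * u\<^sup>2 / 8)"
    using H.Hoeffding_ineq_ge[OF nu pos] unfolding mu eq .
qed



lemma key_arith:
  fixes n Eh Es Ej Sh Ss Sj c Kt e Lip :: real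
  assumes n: "0 < n" and Lip: "1 \<le> Lip" and Kt: "0 < Kt" and e: "e = Kt / (24 * Lip)"
    and h1: "Eh - Es + c \<ge> Kt" and h2: "Sh / n - Ss / n + c \<le> 0"
    and d1: "\<bar>Eh - Ej\<bar> \<le> 8 * e" and d2: "\<bar>Sh - Sj\<bar> \<le> n * (8 * e)"
  shows "Sj \<le> n * Ej - n * (Kt / 6) \<or> Ss \<ge> n * Es + n * (Kt / 6)"
proof -
  have h2': "Sh - Ss + n * c \<le> 0"
  proof -
    have "(Sh / n - Ss / n + c) * n \<le> 0" using h2 n by (simp add: mult_nonpos_nonneg)
    then show ?thesis using n by (simp add: algebra_simps)
  qed
  have h1': "n * Eh - n * Es + n * c \<ge> n * Kt"
  proof -
    have "n * Kt \<le> n * (Eh - Es + c)" using h1 n by (intro mult_left_mono) auto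
    then show ?thesis by (simp add: algebra_simps)
  qed
  have d1': "\<bar>n * Eh - n * Ej\<bar> \<le> n * (8 * e)"
  proof -
    have "\<bar>n * Eh - n * Ej\<bar> = n * \<bar>Eh - Ej\<bar>" using n by (simp add: abs_mult right_diff_distrib[symmetric])
    also have "\<dots> \<le> n * (8 * e)" using d1 n by (intro mult_left_mono) auto
    finally show ?thesis .
  qed
  have eb: "e \<le> Kt / 24" unfolding e using Kt Lip by (simp add: divide_le_eq mult_le_cancel_left1 frac_le)
  have neb: "n * (8 * e) \<le> n * Kt / 3" using eb n by (simp add: mult_left_mono)
  show ?thesis using h1' h2' d1' d2 neb by (auto simp: abs_le_iff)
qed



lemma ae_restrict_close:
  assumes "esssup (cube_measure d) (\<lambda>x. ereal \<bar>restrict f (cube d) x - G x\<bar>) \<le> ereal e"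
  shows "AE x in cube_measure d. \<bar>f x - G x\<bar> \<le> e"
proof -
  let ?F = "\<lambda>x. ereal \<bar>restrict f (cube d) x - G x\<bar>"
  have "AE x in cube_measure d. ?F x \<le> esssup (cube_measure d) ?F" by (rule esssup_AE)
  moreover have "AE x in cube_measure d. x \<in> space (cube_measure d)" by (rule AE_space)
  ultimately show ?thesis
  proof eventually_elim
    case (elim x)
    then have xc: "x \<in> cube d" by (simp add: space_cube)
    have "?F x \<le> ereal e" using elim(1) assms by (rule order_trans)
    then show ?case using xc by simp
  qed
qed

theorem lemma10:
  fixes a :: "nat list" and d n :: nat and R p lam K r t :: real
    and \<rho> :: "((nat \<Rightarrow> real) \<times> real) measure"
    and \<theta>hat :: "(nat \<Rightarrow> (nat \<Rightarrow> real) \<times> real) \<Rightarrow> (nat \<Rightarrow> real)"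
  assumes arch: "length a \<ge> 2" "a!0 = d" "last a = 1" "\<forall>l<length a. 0 < a!l"
    and rho: "prob_space \<rho>" "sets \<rho> = sets (cube_measure d \<Otimes>\<^sub>M count_space {-1, 1::real})"
    and p: "0 < p"
    and n: "0 < n"
    and lam: "0 \<le> lam"
    and minnorm: "\<forall>z\<in>space (PiM {..<n} (\<lambda>_. \<rho>)). min_norm_sol a R p lam n z (\<theta>hat z)"
    and K: "0 < K" and r: "1 < r" and A3: "A3 a R p \<rho> K r"
    and t: "0 < t"
  shows "\<exists>A\<in>sets (PiM {..<n} (\<lambda>_. \<rho>)).
     {z\<in>space (PiM {..<n} (\<lambda>_. \<rho>)).
        pdist a (\<theta>hat z) (argmin_on (params a R) (pop_risk a p lam \<rho>)) \<ge> t} \<subseteq> A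
     \<and> measure (PiM {..<n} (\<lambda>_. \<rho>)) A
       \<le> 4 * real (Cov_inf a R (K * t powr r / (24 * Lip_real a R)))
           * exp (- real n * K\<^sup>2 * t powr (2 * r) / 288)"
proof -
  define M where "M = PiM {..<n} (\<lambda>_. \<rho>)"
  interpret P: prob_space M unfolding M_def by (rule prob_space_PiM) (use rho in auto)
  define Amin where "Amin = argmin_on (params a R) (pop_risk a p lam \<rho>)"
  define RHS where "RHS = 4 * real (Cov_inf a R (K * t powr r / (24 * Lip_real a R)))
           * exp (- real n * K\<^sup>2 * t powr (2 * r) / 288)"
  have RHS0: "0 \<le> RHS" unfolding RHS_def by simp
  have arch': "length a \<ge> 2" "\<forall>l<length a. 0 < a!l" "a!0 = d" using arch by auto
  have np: "0 < nparams a" by (rule nparams_pos[OF arch(1,4)])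
  have hat: "\<theta>hat z \<in> params a R" "\<And>\<theta>. \<theta> \<in> params a R \<Longrightarrow> emp_risk a p lam n z (\<theta>hat z) \<le> emp_risk a p lam n z \<theta>"
    if "z \<in> space M" for z
    using minnorm that unfolding M_def min_norm_sol_def argmin_on_def by auto
  obtain z0 where z0: "z0 \<in> space M" using P.not_empty by auto
  have pne: "params a R \<noteq> {}" using hat(1)[OF z0] by auto
  have R0: "0 \<le> R" using params_R[OF hat(1)[OF z0] np] .
  have Ane: "Amin \<noteq> {}" unfolding Amin_def by (rule argmin_ne[OF arch' rho p lam pne])
  show ?thesis
  proof (cases "R = 0")
    case True
    have p0: "\<theta> = (\<lambda>_. 0)" if "\<theta> \<in> params a R" for \<theta>
    proof
      fix i show "\<theta> i = 0" using that True unfolding params_def by (cases "i < nparams a") auto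
    qed
    have "Amin \<subseteq> {\<lambda>_. 0}" using p0 unfolding Amin_def argmin_on_def by auto
    with Ane have Am: "Amin = {\<lambda>_. 0}" by blast
    have "{z\<in>space M. pdist a (\<theta>hat z) Amin \<ge> t} = {}"
    proof -
      have "pdist a (\<theta>hat z) Amin = 0" if "z \<in> space M" for z
      proof -
        have "\<theta>hat z = (\<lambda>_. 0)" by (rule p0[OF hat(1)[OF that]])
        moreover have "norm_inf a (\<lambda>i. 0) = 0" unfolding norm_inf_def using np
          by (simp add: image_constant_conv lessThan_empty_iff)
        ultimately show ?thesis unfolding pdist_def Am by simp
      qed
      then show ?thesis using t by force
    qed
    then show ?thesis unfolding M_def[symmetric] Amin_def[symmetric] RHS_def[symmetric]
      using RHS0 by (intro bexI[of _ "{}"]) auto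
  next
    case False
    with R0 have Rpos: "0 < R" by simp
    define Lip where "Lip = Lip_real a R"
    have Lip: "1 \<le> Lip" unfolding Lip_def by (rule Lip_ge1[OF arch(1,4,3) Rpos])
    define Kt where "Kt = K * t powr r"
    have Kt: "0 < Kt" using K t by (simp add: Kt_def)
    define e where "e = Kt / (24 * Lip)"
    have e: "0 < e" using Kt Lip by (simp add: e_def)
    define N where "N = Cov_inf a R e"
    have "\<exists>N. CovP a R e N" by (rule cov_exists[OF arch(1,4) R0 e])
    then have "CovP a R e N" unfolding N_def Cov_inf_Least by (rule LeastI_ex)
    then obtain g :: "nat \<Rightarrow> (nat \<Rightarrow> real) \<Rightarrow> real" where
      gcov: "\<forall>f\<in>NN a R. \<exists>j<N. esssup (cube_measure (a!0)) (\<lambda>x. ereal \<bar>f x - g j x\<bar>) \<le> ereal e"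
      unfolding CovP_def by blast
    define close where "close = (\<lambda>\<theta> j. esssup (cube_measure (a!0)) (\<lambda>x. ereal \<bar>restrict (realize a \<theta>) (cube (a!0)) x - g j x\<bar>) \<le> ereal e)"
    define J where "J = {j. j < N \<and> (\<exists>\<theta>\<in>params a R. close \<theta> j)}"
    define th where "th = (\<lambda>j. SOME \<theta>. \<theta> \<in> params a R \<and> close \<theta> j)"
    have th: "th j \<in> params a R" "close (th j) j" if "j \<in> J" for j
    proof -
      have "\<exists>\<theta>. \<theta> \<in> params a R \<and> close \<theta> j" using that unfolding J_def by auto
      then have "th j \<in> params a R \<and> close (th j) j" unfolding th_def by (rule someI_ex)
      then show "th j \<in> params a R" "close (th j) j" by auto
    qed
    have finJ: "finite J" unfolding J_def by auto
    have cardJ: "card J \<le> N" unfolding J_def by (rule card_mono[of "{..<N}", simplified]) auto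
    have N1: "1 \<le> N"
    proof -
      obtain \<theta> where "\<theta> \<in> params a R" using pne by auto
      then have "restrict (realize a \<theta>) (cube (a!0)) \<in> NN a R" unfolding NN_def by auto
      then show ?thesis using gcov by force
    qed
    obtain \<theta>s where ths: "\<theta>s \<in> Amin" using Ane by auto
    have ths_par: "\<theta>s \<in> params a R" using ths unfolding Amin_def argmin_on_def by auto
    define lo where "lo = (\<lambda>\<theta> (w::(nat \<Rightarrow> real) \<times> real). (realize a \<theta> (fst w) - snd w)\<^sup>2)"
    define E where "E = (\<lambda>\<theta>. \<integral>w. lo \<theta> w \<partial>\<rho>)"
    define S where "S = (\<lambda>\<theta> (z::nat \<Rightarrow> (nat \<Rightarrow> real) \<times> real). \<Sum>i<n. lo \<theta> (z i))"
    define u where "u = Kt / 6"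
    have u: "0 \<le> u" using Kt by (simp add: u_def)
    have lo_meas: "lo \<theta> \<in> borel_measurable \<rho>" for \<theta>
      unfolding lo_def by (rule loss_meas[OF arch(1,2) rho(2)])
    have lo_bnd: "0 \<le> lo \<theta> w \<and> lo \<theta> w \<le> 4" if "w \<in> space \<rho>" for \<theta> w
    proof -
      have c: "snd w \<in> {-1,1}" using space_rho[OF rho(2) that] by auto
      show ?thesis using loss_lip(2,3)[OF clip_lip(2) clip_lip(2), of "snd w"] c
        by (auto simp: realize_def lo_def)
    qed
    have S_meas: "S \<theta> \<in> borel_measurable M" for \<theta>
    proof -
      have "(\<lambda>z. lo \<theta> (z i)) \<in> borel_measurable M" if "i < n" for i
        using measurable_compose[OF measurable_component_singleton[of i "{..<n}" "\<lambda>_. \<rho>"] lo_meas[of \<theta>]] that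
        unfolding M_def by simp
      then show ?thesis unfolding S_def by (intro borel_measurable_sum) auto
    qed
    define Bj where "Bj = (\<lambda>j. {z \<in> space M. S (th j) z \<le> real n * E (th j) - real n * u})"
    define Bs where "Bs = {z \<in> space M. S \<theta>s z \<ge> real n * E \<theta>s + real n * u}"
    define A where "A = (\<Union>j\<in>J. Bj j) \<union> Bs"
    have Bj_sets: "Bj j \<in> sets M" for j
    proof -
      have [measurable]: "S (th j) \<in> borel_measurable M" by (rule S_meas)
      show ?thesis unfolding Bj_def by measurable
    qed
    have Bs_sets: "Bs \<in> sets M"
    proof -
      have [measurable]: "S \<theta>s \<in> borel_measurable M" by (rule S_meas)
      show ?thesis unfolding Bs_def by measurable
    qed
    have A_sets: "A \<in> sets M" unfolding A_def using Bj_sets Bs_sets finJ by auto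
    define ex where "ex = exp (- real n * u\<^sup>2 / 8)"
    have ex_eq: "ex = exp (- real n * K\<^sup>2 * t powr (2 * r) / 288)"
    proof -
      have "(t powr r)\<^sup>2 = t powr (2 * r)" using t by (simp add: powr_power)
      then have "- real n * u\<^sup>2 / 8 = - real n * K\<^sup>2 * t powr (2 * r) / 288"
        unfolding u_def Kt_def by (simp add: power2_eq_square field_simps)
      then show ?thesis unfolding ex_def by simp
    qed
    have mBj: "measure M (Bj j) \<le> ex" for j
      unfolding Bj_def ex_def S_def E_def M_def using hoeff(1)[OF rho(1) n lo_meas lo_bnd u] by simp
    have mBs: "measure M Bs \<le> ex"
      unfolding Bs_def ex_def S_def E_def M_def using hoeff(2)[OF rho(1) n lo_meas lo_bnd u] by simp
    have ex0: "0 \<le> ex" unfolding ex_def by simp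
    have "measure M A \<le> measure M (\<Union>j\<in>J. Bj j) + measure M Bs"
      unfolding A_def by (rule measure_Un_le) (use Bj_sets Bs_sets finJ in auto)
    also have "measure M (\<Union>j\<in>J. Bj j) \<le> (\<Sum>j\<in>J. measure M (Bj j))"
      by (rule P.finite_measure_subadditive_finite) (use finJ Bj_sets in auto)
    also have "\<dots> \<le> (\<Sum>j\<in>J. ex)" by (rule sum_mono) (rule mBj)
    also have "\<dots> = real (card J) * ex" by simp
    finally have "measure M A \<le> real (card J) * ex + ex" using mBs by linarith
    also have "\<dots> \<le> real N * ex + real N * ex"
    proof (rule add_mono)
      show "real (card J) * ex \<le> real N * ex" using cardJ ex0 by (intro mult_right_mono) auto
      have "1 * ex \<le> real N * ex" using N1 ex0 by (intro mult_right_mono) auto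
      then show "ex \<le> real N * ex" by simp
    qed
    also have "\<dots> \<le> RHS" unfolding RHS_def ex_eq N_def e_def Kt_def Lip_def using ex0 ex_eq
      by (simp add: algebra_simps)
    finally have mA: "measure M A \<le> RHS" .
    have incl: "{z\<in>space M. pdist a (\<theta>hat z) Amin \<ge> t} \<subseteq> A"
    proof
      fix z assume "z \<in> {z\<in>space M. pdist a (\<theta>hat z) Amin \<ge> t}"
      then have z: "z \<in> space M" and pd: "pdist a (\<theta>hat z) Amin \<ge> t" by auto
      define h where "h = \<theta>hat z"
      have h: "h \<in> params a R" using hat(1)[OF z] by (simp add: h_def)
      have emp: "emp_risk a p lam n z h \<le> emp_risk a p lam n z \<theta>s" using hat(2)[OF z ths_par] by (simp add: h_def)
      have pop: "pop_risk a p lam \<rho> h - pop_risk a p lam \<rho> \<theta>s \<ge> Kt"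
        using A3 lam t ths h pd unfolding A3_def Amin_def Kt_def h_def by blast
      have "restrict (realize a h) (cube (a!0)) \<in> NN a R" unfolding NN_def using h by auto
      then obtain j where j: "j < N" and cj: "close h j" using gcov unfolding close_def by blast
      have jJ: "j \<in> J" unfolding J_def using j cj h by auto
      note thj = th[OF jJ]
      have ae1: "AE x in cube_measure (a!0). \<bar>realize a h x - g j x\<bar> \<le> e"
        by (rule ae_restrict_close) (use cj in \<open>simp add: close_def\<close>)
      have ae2: "AE x in cube_measure (a!0). \<bar>realize a (th j) x - g j x\<bar> \<le> e"
        by (rule ae_restrict_close) (use thj(2) in \<open>simp add: close_def\<close>)
      have ae3: "AE x in cube_measure (a!0). \<bar>realize a h x - realize a (th j) x\<bar> \<le> 2 * e"
        using ae1 ae2 by eventually_elim auto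
      have pw: "\<bar>realize a h x - realize a (th j) x\<bar> \<le> 2 * e" if "x \<in> cube (a!0)" for x
        by (rule ae_pointwise[OF arch(1,4) h thj(1) ae3 that])
      have lw: "\<bar>lo h w - lo (th j) w\<bar> \<le> 8 * e" if w: "w \<in> space \<rho>" for w
      proof -
        have c: "fst w \<in> cube (a!0)" "snd w \<in> {-1,1}" using space_rho[OF rho(2) w] arch(2) by auto
        have "\<bar>lo h w - lo (th j) w\<bar> \<le> 4 * \<bar>realize a h (fst w) - realize a (th j) (fst w)\<bar>"
          unfolding lo_def by (rule loss_lip) (use c in \<open>auto simp: realize_def clip_lip(2)\<close>)
        also have "\<dots> \<le> 4 * (2 * e)" using pw[OF c(1)] by simp
        finally show ?thesis by simp
      qed
      have dE: "\<bar>E h - E (th j)\<bar> \<le> 8 * e"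
        unfolding E_def by (rule int_close[OF rho(1) lo_meas lo_meas, where B=4]) (use lo_bnd lw in auto)
      have zi: "z i \<in> space \<rho>" if "i < n" for i using z that unfolding M_def by (auto simp: space_PiM PiE_iff)
      have dS: "\<bar>S h z - S (th j) z\<bar> \<le> real n * (8 * e)"
      proof -
        have "\<bar>S h z - S (th j) z\<bar> = \<bar>\<Sum>i<n. lo h (z i) - lo (th j) (z i)\<bar>"
          unfolding S_def by (simp add: sum_subtractf)
        also have "\<dots> \<le> (\<Sum>i<n. \<bar>lo h (z i) - lo (th j) (z i)\<bar>)" by (rule sum_abs)
        also have "\<dots> \<le> (\<Sum>i<n. 8 * e)" by (rule sum_mono) (use lw zi in auto)
        finally show ?thesis by simp
      qed
      have popE: "pop_risk a p lam \<rho> \<theta> = E \<theta> + lam / 2 * norm_pp a p \<theta>" for \<theta>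
        unfolding pop_risk_def E_def lo_def ..
      have empS: "emp_risk a p lam n z \<theta> = S \<theta> z / real n + lam / 2 * norm_pp a p \<theta>" for \<theta>
        unfolding emp_risk_def S_def lo_def by simp
      have h1: "E h - E \<theta>s + (lam / 2 * norm_pp a p h - lam / 2 * norm_pp a p \<theta>s) \<ge> Kt"
        using pop unfolding popE by linarith
      have h2: "S h z / real n - S \<theta>s z / real n + (lam / 2 * norm_pp a p h - lam / 2 * norm_pp a p \<theta>s) \<le> 0"
        using emp unfolding empS by linarith
      have "S (th j) z \<le> real n * E (th j) - real n * (Kt / 6) \<or> S \<theta>s z \<ge> real n * E \<theta>s + real n * (Kt / 6)"
        by (rule key_arith[OF _ Lip Kt e_def h1 h2 dE dS]) (use n in simp)
      then show "z \<in> A" unfolding A_def Bj_def Bs_def u_def using z jJ by blast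
    qed
    show ?thesis unfolding M_def[symmetric] Amin_def[symmetric] RHS_def[symmetric]
      using incl mA A_sets by blast
  qed
qed

end
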